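(* Let $d\ge1$, $z\ge 0$, let $0<\varphi_1\le\cdots\le\varphi_d$ and let $\tilde v_1,\ldots,\tilde v_d\in\mathbb C$ be nonzero. Let $\varphi_{\max}=\varphi_d$ and define, for $\lambda>0$ with $\lambda\notin\{\varphi_1,\dots,\varphi_d\}$, $$f(\lambda)=\lambda^2\sum_{m=1}^d\frac{\varphi_m|\tilde v_m|^2}{(\lambda-\varphi_m)^2}-\lambda+z.$$ Then $f$ has (1) no roots smaller than or equal to $z$; (2) zero, one, or two roots in $(z,\varphi_k)$, where $\varphi_k$ is the smallest eigenvalue $\varphi_m$ larger than $z$ (if such an eigenvalue exists); (3) zero, one, or two roots in $(\varphi_{L-1},\varphi_L)$ for each $L=k+1,\ldots,d$; (4) a unique root in the interval $(\max(\varphi_{\max},z),+\infty)$.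
   Context: This lemma is stated under the standing assumption that all indices are in the support $\mathcal S=\{m:\varphi_m|\tilde v_m|^2\neq0\}$, i.e. $\mathcal S=\{1,\dots,d\}$; here $\varphi_1,\ldots,\varphi_d$ are the eigenvalues of a Hermitian positive semi-definite matrix $\mathbf U$ and $\tilde v_m$ the coordinates of a vector $\mathbf v$ in the corresponding eigenbasis (this origin is not needed for the statement). *)

theory Defs
  imports Complex_Main
begin

definition secf :: "nat \<Rightarrow> (nat \<Rightarrow> real) \<Rightarrow> (nat \<Rightarrow> complex) \<Rightarrow> real \<Rightarrow> real \<Rightarrow> real" where
  "secf d \<phi> v z l =
     l\<^sup>2 * (\<Sum>m = 1..d. \<phi> m * (cmod (v m))\<^sup>2 / (l - \<phi> m)\<^sup>2) - l + z"

definition secf_root :: "nat \<Rightarrow> (nat \<Rightarrow> real) \<Rightarrow> (nat \<Rightarrow> complex) \<Rightarrow> real \<Rightarrow> real \<Rightarrow> bool" where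
  "secf_root d \<phi> v z l \<longleftrightarrow>
     l > 0 \<and> l \<notin> \<phi> ` {1..d} \<and> secf d \<phi> v z l = 0"

end

theory Submission
  imports Defs
begin


lemma alg2: fixes a c t :: real assumes "t \<noteq> 0" shows
  "- ((2 * c * a * t ^ 3 - 6 * (a * (c * ((t + c) * t\<^sup>2)))) / t ^ 6) = a * (2 * c * (2 * (t + c) + c)) / t ^ 4"
  using assms by (simp add: field_simps eval_nat_numeral)

lemma alg1: fixes a c t :: real assumes "t \<noteq> 0" shows 
  "(a*(2*(t+c))*t^2 - a*(t+c)^2*(2*t))/(t^2*t^2) = a*(-2*c*(t+c)/t^3)"
  using assms by (simp add: field_simps eval_nat_numeral)

lemma term_deriv1:
  fixes a c l :: real assumes "l \<noteq> c"
  shows "((\<lambda>l. a * l\<^sup>2 / (l - c)\<^sup>2) has_real_derivative a * (-2 * c * l / (l - c)^3)) (at l)"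
proof -
  have ne: "l - c \<noteq> 0" using assms by simp
  have "((\<lambda>l. a * l\<^sup>2 / (l - c)\<^sup>2) has_real_derivative
     (a * (2 * l) * (l - c)\<^sup>2 - a * l\<^sup>2 * (2 * (l - c))) / ((l - c)\<^sup>2 * (l - c)\<^sup>2)) (at l)"
    by (auto intro!: derivative_eq_intros simp: ne assms)
  moreover have "(a * (2 * l) * (l - c)\<^sup>2 - a * l\<^sup>2 * (2 * (l - c))) / ((l - c)\<^sup>2 * (l - c)\<^sup>2)
      = a * (-2 * c * l / (l - c)^3)"
    using alg1[OF ne, of a c] by simp
  ultimately show ?thesis by simp
qed

lemma term_deriv2:
  fixes a c l :: real assumes "l \<noteq> c"
  shows "((\<lambda>l. a * (-2 * c * l / (l - c)^3)) has_real_derivative a * (2 * c * (2*l + c) / (l - c)^4)) (at l)"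
proof -
  have ne: "l - c \<noteq> 0" using assms by simp
  show ?thesis
  apply (auto intro!: derivative_eq_intros simp: assms)
    using alg2[OF ne, of c a] by simp
qed

definition GG :: "nat \<Rightarrow> (nat \<Rightarrow> real) \<Rightarrow> (nat \<Rightarrow> complex) \<Rightarrow> real \<Rightarrow> real \<Rightarrow> real" where
  "GG d \<phi> v z l = (\<Sum>m = 1..d. (\<phi> m * (cmod (v m))\<^sup>2) * l\<^sup>2 / (l - \<phi> m)\<^sup>2) - l + z"

definition GG1 :: "nat \<Rightarrow> (nat \<Rightarrow> real) \<Rightarrow> (nat \<Rightarrow> complex) \<Rightarrow> real \<Rightarrow> real" where
  "GG1 d \<phi> v l = (\<Sum>m = 1..d. (\<phi> m * (cmod (v m))\<^sup>2) * (-2 * \<phi> m * l / (l - \<phi> m)^3)) - 1"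

definition GG2 :: "nat \<Rightarrow> (nat \<Rightarrow> real) \<Rightarrow> (nat \<Rightarrow> complex) \<Rightarrow> real \<Rightarrow> real" where
  "GG2 d \<phi> v l = (\<Sum>m = 1..d. (\<phi> m * (cmod (v m))\<^sup>2) * (2 * \<phi> m * (2*l + \<phi> m) / (l - \<phi> m)^4))"

lemma secf_GG: "secf d \<phi> v z l = GG d \<phi> v z l"
  unfolding secf_def GG_def by (simp add: sum_distrib_left algebra_simps)

lemma GG_deriv:
  assumes "\<forall>m\<in>{1..d}. l \<noteq> \<phi> m"
  shows "(GG d \<phi> v z has_real_derivative GG1 d \<phi> v l) (at l)"
proof -
  have "((\<lambda>l. (\<Sum>m = 1..d. (\<phi> m * (cmod (v m))\<^sup>2) * l\<^sup>2 / (l - \<phi> m)\<^sup>2) - l + z) has_real_derivative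
     (\<Sum>m = 1..d. (\<phi> m * (cmod (v m))\<^sup>2) * (-2 * \<phi> m * l / (l - \<phi> m)^3)) - 1 + 0) (at l)"
    apply (intro DERIV_add DERIV_diff DERIV_sum DERIV_ident DERIV_const)
    using assms term_deriv1 by blast
  then show ?thesis unfolding GG_def[abs_def] GG1_def by simp
qed

lemma GG1_deriv:
  assumes "\<forall>m\<in>{1..d}. l \<noteq> \<phi> m"
  shows "(GG1 d \<phi> v has_real_derivative GG2 d \<phi> v l) (at l)"
proof -
  have "((\<lambda>l. (\<Sum>m = 1..d. (\<phi> m * (cmod (v m))\<^sup>2) * (-2 * \<phi> m * l / (l - \<phi> m)^3)) - 1) has_real_derivative
     (\<Sum>m = 1..d. (\<phi> m * (cmod (v m))\<^sup>2) * (2 * \<phi> m * (2*l + \<phi> m) / (l - \<phi> m)^4)) - 0) (at l)"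
    apply (intro DERIV_diff DERIV_sum DERIV_const)
    using assms term_deriv2 by blast
  then show ?thesis unfolding GG1_def[abs_def] GG2_def by simp
qed

lemma GG2_pos:
  assumes d: "d \<ge> 1" and l: "l > 0"
    and h: "\<And>m. m \<in> {1..d} \<Longrightarrow> \<phi> m > 0 \<and> v m \<noteq> 0 \<and> l \<noteq> \<phi> m"
  shows "GG2 d \<phi> v l > 0"
  unfolding GG2_def
proof (rule sum_pos)
  show "finite {1..d}" by simp
  show "{1..d} \<noteq> {}" using d by simp
  fix m assume m: "m \<in> {1..d}"
  have "l - \<phi> m \<noteq> 0" using h[OF m] by simp
  then have "(l - \<phi> m)^4 > 0" by (simp add: zero_less_power_eq)
  moreover have "\<phi> m * (cmod (v m))\<^sup>2 > 0" using h[OF m] by simp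
  moreover have "2 * \<phi> m * (2*l + \<phi> m) > 0" using h[OF m] l by simp
  ultimately show "0 < \<phi> m * (cmod (v m))\<^sup>2 * (2 * \<phi> m * (2 * l + \<phi> m) / (l - \<phi> m) ^ 4)"
    by simp
qed

lemma GG1_neg:
  assumes h: "\<And>m. m \<in> {1..d} \<Longrightarrow> \<phi> m > 0 \<and> \<phi> m < l"
  shows "GG1 d \<phi> v l < 0"
proof -
  have "(\<Sum>m = 1..d. (\<phi> m * (cmod (v m))\<^sup>2) * (-2 * \<phi> m * l / (l - \<phi> m)^3)) \<le> 0"
  proof (rule sum_nonpos)
    fix m assume m: "m \<in> {1..d}"
    have "(l - \<phi> m)^3 > 0" using h[OF m] by simp
    moreover have "\<phi> m * (cmod (v m))\<^sup>2 \<ge> 0" using h[OF m] by simp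
    moreover have "-2 * \<phi> m * l \<le> 0" using h[OF m] by simp
    ultimately show "\<phi> m * (cmod (v m))\<^sup>2 * (-2 * \<phi> m * l / (l - \<phi> m)^3) \<le> 0"
      by (simp add: mult_nonneg_nonpos divide_nonpos_pos)
  qed
  then show ?thesis unfolding GG1_def by simp
qed

lemma three_pts:
  fixes S :: "real set"
  assumes "\<And>x y w. x \<in> S \<Longrightarrow> y \<in> S \<Longrightarrow> w \<in> S \<Longrightarrow> x < y \<Longrightarrow> y < w \<Longrightarrow> False"
  shows "finite S \<and> card S \<le> 2"
proof -
  have "\<exists>x y. S \<subseteq> {x, y}"
  proof (cases "S = {}")
    case True then show ?thesis by blast
  next
    case False
    then obtain x where x: "x \<in> S" by blast
    show ?thesis
    proof (cases "S \<subseteq> {x}")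
      case True then show ?thesis by blast
    next
      case False
      then obtain y where y: "y \<in> S" "y \<noteq> x" by blast
      have "S \<subseteq> {x, y}"
      proof
        fix w assume w: "w \<in> S"
        show "w \<in> {x, y}"
        proof (rule ccontr)
          assume "w \<notin> {x, y}"
          then have "w \<noteq> x" "w \<noteq> y" by auto
          then show False using assms x y w
            by (metis linorder_neq_iff)
        qed
      qed
      then show ?thesis by blast
    qed
  qed
  then obtain x y where "S \<subseteq> {x, y}" by blast
  moreover have "card {x, y} \<le> 2" by (simp add: card_insert_if)
  ultimately show ?thesis
    by (meson card_mono finite.emptyI finite.insertI finite_subset order_trans)
qed

lemma at_most_two:
  assumes d: "d \<ge> 1" and p: "p \<ge> 0"
    and h: "\<And>m. m \<in> {1..d} \<Longrightarrow> \<phi> m > 0 \<and> v m \<noteq> 0"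
    and np: "\<And>m. m \<in> {1..d} \<Longrightarrow> \<not> (p < \<phi> m \<and> \<phi> m < q)"
  shows "finite {l. secf_root d \<phi> v z l \<and> p < l \<and> l < q}
       \<and> card {l. secf_root d \<phi> v z l \<and> p < l \<and> l < q} \<le> 2"
proof (rule three_pts)
  fix x y w
  assume x: "x \<in> {l. secf_root d \<phi> v z l \<and> p < l \<and> l < q}"
     and y: "y \<in> {l. secf_root d \<phi> v z l \<and> p < l \<and> l < q}"
     and w: "w \<in> {l. secf_root d \<phi> v z l \<and> p < l \<and> l < q}"
     and xy: "x < y" and yw: "y < w"
  have Gx: "GG d \<phi> v z x = 0" and Gy: "GG d \<phi> v z y = 0" and Gw: "GG d \<phi> v z w = 0"
    using x y w by (auto simp: secf_root_def secf_GG)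
  have px: "p < x" and wq: "w < q" using x w by auto
  have inside: "\<And>t m. x \<le> t \<Longrightarrow> t \<le> w \<Longrightarrow> m \<in> {1..d} \<Longrightarrow> t \<noteq> \<phi> m"
    using np px wq by fastforce
  have tpos: "\<And>t. x \<le> t \<Longrightarrow> t > 0" using px p by linarith
  have D: "\<And>t. x \<le> t \<Longrightarrow> t \<le> w \<Longrightarrow> (GG d \<phi> v z has_real_derivative GG1 d \<phi> v t) (at t)"
    using GG_deriv inside by blast
  have D1: "\<And>t. x \<le> t \<Longrightarrow> t \<le> w \<Longrightarrow> (GG1 d \<phi> v has_real_derivative GG2 d \<phi> v t) (at t)"
    using GG1_deriv inside by blast
  have P2: "\<And>t. x \<le> t \<Longrightarrow> t \<le> w \<Longrightarrow> GG2 d \<phi> v t > 0"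
    using GG2_pos[OF d] h inside tpos by blast
  have "\<exists>l c. x < c \<and> c < y \<and> DERIV (GG d \<phi> v z) c :> l \<and> GG d \<phi> v z y - GG d \<phi> v z x = (y - x) * l"
    apply (rule MVT[OF xy])
    subgoal apply (rule DERIV_atLeastAtMost_imp_continuous_on)
      subgoal for t using D[of t] xy yw by auto
      done
    subgoal for t using D[of t] xy yw unfolding real_differentiable_def by auto
    done
  then obtain l1 c1 where c1: "x < c1" "c1 < y" "DERIV (GG d \<phi> v z) c1 :> l1"
      "GG d \<phi> v z y - GG d \<phi> v z x = (y - x) * l1" by blast
  have "l1 = 0" using c1(4) Gx Gy xy by simp
  moreover have "l1 = GG1 d \<phi> v c1" using DERIV_unique[OF c1(3) D] c1 xy yw by simp
  ultimately have z1: "GG1 d \<phi> v c1 = 0" by simp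
  have "\<exists>l c. y < c \<and> c < w \<and> DERIV (GG d \<phi> v z) c :> l \<and> GG d \<phi> v z w - GG d \<phi> v z y = (w - y) * l"
    apply (rule MVT[OF yw])
    subgoal apply (rule DERIV_atLeastAtMost_imp_continuous_on)
      subgoal for t using D[of t] xy yw by auto
      done
    subgoal for t using D[of t] xy yw unfolding real_differentiable_def by auto
    done
  then obtain l2 c2 where c2: "y < c2" "c2 < w" "DERIV (GG d \<phi> v z) c2 :> l2"
      "GG d \<phi> v z w - GG d \<phi> v z y = (w - y) * l2" by blast
  have "l2 = 0" using c2(4) Gw Gy yw by simp
  moreover have "l2 = GG1 d \<phi> v c2" using DERIV_unique[OF c2(3) D] c2 xy yw by simp
  ultimately have z2: "GG1 d \<phi> v c2 = 0" by simp
  have "GG1 d \<phi> v c1 < GG1 d \<phi> v c2"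
  proof (rule DERIV_pos_imp_increasing[where f="GG1 d \<phi> v"])
    show "c1 < c2" using c1 c2 by linarith
    fix t assume "c1 \<le> t" "t \<le> c2"
    then have "x \<le> t" "t \<le> w" using c1 c2 by linarith+
    then show "\<exists>y. DERIV (GG1 d \<phi> v) t :> y \<and> y > 0" using D1 P2 by blast
  qed
  then show False using z1 z2 by simp
qed

lemma root_gt_z:
  assumes d: "d \<ge> 1" and h: "\<And>m. m \<in> {1..d} \<Longrightarrow> \<phi> m > 0 \<and> v m \<noteq> 0"
    and r: "secf_root d \<phi> v z l"
  shows "l > z"
proof (rule ccontr)
  assume "\<not> l > z"
  then have lz: "l \<le> z" by simp
  have l0: "l > 0" and np: "l \<notin> \<phi> ` {1..d}" and G0: "GG d \<phi> v z l = 0"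
    using r by (auto simp: secf_root_def secf_GG)
  have "(\<Sum>m = 1..d. (\<phi> m * (cmod (v m))\<^sup>2) * l\<^sup>2 / (l - \<phi> m)\<^sup>2) > 0"
  proof (rule sum_pos)
    show "finite {1..d}" by simp
    show "{1..d} \<noteq> {}" using d by simp
    fix m assume m: "m \<in> {1..d}"
    have "l - \<phi> m \<noteq> 0" using np m by auto
    then have "(l - \<phi> m)^2 > 0" by simp
    moreover have "\<phi> m * (cmod (v m))\<^sup>2 > 0" using h[OF m] by simp
    moreover have "l^2 > 0" using l0 by simp
    ultimately show "0 < \<phi> m * (cmod (v m))\<^sup>2 * l\<^sup>2 / (l - \<phi> m)\<^sup>2" by simp
  qed
  then have "GG d \<phi> v z l > 0" unfolding GG_def using lz by linarith
  then show False using G0 by simp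
qed


theorem lemma3:
  fixes d :: nat and \<phi> :: "nat \<Rightarrow> real" and v :: "nat \<Rightarrow> complex" and z :: real
  assumes d: "d \<ge> 1"
    and z: "z \<ge> 0"
    and pos: "\<phi> 1 > 0"
    and mono: "\<And>i j. 1 \<le> i \<Longrightarrow> i \<le> j \<Longrightarrow> j \<le> d \<Longrightarrow> \<phi> i \<le> \<phi> j"
    and v: "\<And>m. m \<in> {1..d} \<Longrightarrow> v m \<noteq> 0"
  shows
    "(\<forall>l. secf_root d \<phi> v z l \<longrightarrow> l > z)
   \<and> (\<forall>k. k \<in> {1..d} \<and> \<phi> k > z \<and> (\<forall>m\<in>{1..d}. \<phi> m > z \<longrightarrow> k \<le> m) \<longrightarrow>
        (finite {l. secf_root d \<phi> v z l \<and> z < l \<and> l < \<phi> k}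
         \<and> card {l. secf_root d \<phi> v z l \<and> z < l \<and> l < \<phi> k} \<le> 2)
      \<and> (\<forall>L\<in>{k+1..d}.
           finite {l. secf_root d \<phi> v z l \<and> \<phi> (L - 1) < l \<and> l < \<phi> L}
         \<and> card {l. secf_root d \<phi> v z l \<and> \<phi> (L - 1) < l \<and> l < \<phi> L} \<le> 2))
   \<and> (\<exists>!l. l > max (\<phi> d) z \<and> secf_root d \<phi> v z l)"
proof -
  have h: "\<And>m. m \<in> {1..d} \<Longrightarrow> \<phi> m > 0 \<and> v m \<noteq> 0"
  proof -
    fix m assume m: "m \<in> {1..d}"
    have "\<phi> 1 \<le> \<phi> m" using mono[of 1 m] m by auto
    then show "\<phi> m > 0 \<and> v m \<noteq> 0" using pos v m by auto
  qed
  have P1: "\<forall>l. secf_root d \<phi> v z l \<longrightarrow> l > z"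
    using root_gt_z[where \<phi>=\<phi> and v=v, OF d h] by blast
  have P23: "\<forall>k. k \<in> {1..d} \<and> \<phi> k > z \<and> (\<forall>m\<in>{1..d}. \<phi> m > z \<longrightarrow> k \<le> m) \<longrightarrow>
        (finite {l. secf_root d \<phi> v z l \<and> z < l \<and> l < \<phi> k}
         \<and> card {l. secf_root d \<phi> v z l \<and> z < l \<and> l < \<phi> k} \<le> 2)
      \<and> (\<forall>L\<in>{k+1..d}.
           finite {l. secf_root d \<phi> v z l \<and> \<phi> (L - 1) < l \<and> l < \<phi> L}
         \<and> card {l. secf_root d \<phi> v z l \<and> \<phi> (L - 1) < l \<and> l < \<phi> L} \<le> 2)"
  proof (intro allI impI)
    fix k assume k: "k \<in> {1..d} \<and> \<phi> k > z \<and> (\<forall>m\<in>{1..d}. \<phi> m > z \<longrightarrow> k \<le> m)"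
    have Q2: "finite {l. secf_root d \<phi> v z l \<and> z < l \<and> l < \<phi> k}
         \<and> card {l. secf_root d \<phi> v z l \<and> z < l \<and> l < \<phi> k} \<le> 2"
    proof (rule at_most_two[where \<phi>=\<phi> and v=v, OF d z h])
      fix m assume m: "m \<in> {1..d}"
      show "\<not> (z < \<phi> m \<and> \<phi> m < \<phi> k)"
      proof
        assume a: "z < \<phi> m \<and> \<phi> m < \<phi> k"
        then have "k \<le> m" using k m by blast
        then have "\<phi> k \<le> \<phi> m" using mono[of k m] k m by auto
        then show False using a by simp
      qed
    qed (auto simp: h)
    have Q3: "finite {l. secf_root d \<phi> v z l \<and> \<phi> (L - 1) < l \<and> l < \<phi> L}
         \<and> card {l. secf_root d \<phi> v z l \<and> \<phi> (L - 1) < l \<and> l < \<phi> L} \<le> 2"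
      if L: "L \<in> {k+1..d}" for L
    proof -
    from L have L1: "L - 1 \<ge> 1" "L - 1 \<le> d" "L \<le> d" using k by auto
    have p0: "\<phi> (L - 1) \<ge> 0" using h[of "L - 1"] L1 by auto
    show "finite {l. secf_root d \<phi> v z l \<and> \<phi> (L - 1) < l \<and> l < \<phi> L}
         \<and> card {l. secf_root d \<phi> v z l \<and> \<phi> (L - 1) < l \<and> l < \<phi> L} \<le> 2"
    proof (rule at_most_two[where \<phi>=\<phi> and v=v, OF d p0 h])
      fix m assume m: "m \<in> {1..d}"
      show "\<not> (\<phi> (L - 1) < \<phi> m \<and> \<phi> m < \<phi> L)"
      proof (cases "m \<le> L - 1")
        case True
        then have "\<phi> m \<le> \<phi> (L - 1)" using mono[of m "L - 1"] m L1 by auto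
        then show ?thesis by simp
      next
        case False
        then have "\<phi> L \<le> \<phi> m" using mono[of L m] m L1 by auto
        then show ?thesis by simp
      qed
    qed auto
    qed
    show "(finite {l. secf_root d \<phi> v z l \<and> z < l \<and> l < \<phi> k}
         \<and> card {l. secf_root d \<phi> v z l \<and> z < l \<and> l < \<phi> k} \<le> 2)
      \<and> (\<forall>L\<in>{k+1..d}.
           finite {l. secf_root d \<phi> v z l \<and> \<phi> (L - 1) < l \<and> l < \<phi> L}
         \<and> card {l. secf_root d \<phi> v z l \<and> \<phi> (L - 1) < l \<and> l < \<phi> L} \<le> 2)"
      using Q2 Q3 by blast
  qed
  define D where "D = \<phi> d"
  have le: "\<And>m. m \<in> {1..d} \<Longrightarrow> \<phi> m \<le> D" using mono D_def by auto
  have D0: "D > 0" using h[of d] d D_def by auto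
  have derG: "\<And>t. t > D \<Longrightarrow> (GG d \<phi> v z has_real_derivative GG1 d \<phi> v t) (at t)"
    using GG_deriv le by (metis not_le order_refl)
  have negG1: "\<And>t. t > D \<Longrightarrow> GG1 d \<phi> v t < 0"
    using GG1_neg h le by (meson le_less_trans)
  have dec: "\<And>x y. D < x \<Longrightarrow> x < y \<Longrightarrow> GG d \<phi> v z y < GG d \<phi> v z x"
  proof -
    fix x y assume xy: "D < x" "x < y"
    show "GG d \<phi> v z y < GG d \<phi> v z x"
    proof (rule DERIV_neg_imp_decreasing[where f="GG d \<phi> v z"])
      show "x < y" using xy by simp
      fix t assume "x \<le> t" "t \<le> y"
      then have "t > D" using xy by linarith
      then show "\<exists>y. DERIV (GG d \<phi> v z) t :> y \<and> y < 0" using derG negG1 by blast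
    qed
  qed
  define a where "a m = \<phi> m * (cmod (v m))\<^sup>2" for m
  have apos: "\<And>m. m \<in> {1..d} \<Longrightarrow> a m > 0" using h a_def by auto
  have anon: "\<And>m. m \<in> {1..d} \<Longrightarrow> a m \<ge> 0" using apos by (simp add: less_imp_le)
  define A where "A = (\<Sum>m = 1..d. a m)"
  have A0: "A \<ge> 0" unfolding A_def using apos by (meson less_imp_le sum_nonneg)
  define c where "c = a d * D^2"
  have c0: "c > 0" unfolding c_def using apos[of d] d D0 by simp
  define e where "e = min 1 (c / (D + 2))"
  have e0: "e > 0" "e \<le> 1" "e \<le> c / (D + 2)" unfolding e_def using c0 D0 by auto
  define x0 where "x0 = D + e"
  define x1 where "x1 = 2 * D + 4 * A + z + 1"
  have x01: "x0 \<le> x1" unfolding x0_def x1_def using e0 D0 A0 z by linarith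
  have GGa: "\<And>l. GG d \<phi> v z l = (\<Sum>m = 1..d. a m * l\<^sup>2 / (l - \<phi> m)\<^sup>2) - l + z"
    unfolding GG_def a_def by simp
  have "(\<Sum>m = 1..d. a m * x1\<^sup>2 / (x1 - \<phi> m)\<^sup>2) \<le> (\<Sum>m = 1..d. 4 * a m)"
  proof (rule sum_mono)
    fix m assume m: "m \<in> {1..d}"
    define t where "t = x1 - \<phi> m"
    have pm: "\<phi> m \<le> D" using le[OF m] .
    have t0: "t > 0" unfolding t_def x1_def using pm A0 z D0 by (simp add: algebra_simps)
    have x1t: "x1 \<le> 2 * t" unfolding t_def x1_def using pm A0 z D0 by (simp add: algebra_simps)
    have "x1\<^sup>2 \<le> (2 * t)\<^sup>2" using x1t D0 A0 z unfolding x1_def by (intro power_mono) linarith+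
    then have "a m * x1\<^sup>2 \<le> a m * (4 * t\<^sup>2)" using apos[OF m] by (simp add: power_mult_distrib)
    then have "a m * x1\<^sup>2 / t\<^sup>2 \<le> 4 * a m" using t0 by (simp add: pos_divide_le_eq)
    then show "a m * x1\<^sup>2 / (x1 - \<phi> m)\<^sup>2 \<le> 4 * a m" unfolding t_def .
  qed
  then have Gx1: "GG d \<phi> v z x1 < 0" unfolding GGa A_def x1_def
    by (simp add: sum_distrib_left[symmetric]) (use D0 in linarith)
  have "(\<Sum>m = 1..d. a m * x0\<^sup>2 / (x0 - \<phi> m)\<^sup>2) \<ge> a d * x0\<^sup>2 / (x0 - \<phi> d)\<^sup>2"
    by (rule member_le_sum) (use d anon in \<open>auto intro!: divide_nonneg_nonneg mult_nonneg_nonneg\<close>)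
  moreover have "a d * x0\<^sup>2 / (x0 - \<phi> d)\<^sup>2 \<ge> c / e^2"
  proof -
    have "x0 - \<phi> d = e" unfolding x0_def D_def by simp
    moreover have "a d * x0\<^sup>2 \<ge> c" unfolding c_def using apos[of d] d D0 e0 unfolding x0_def
      by (intro mult_left_mono power_mono) auto
    ultimately show ?thesis using e0 by (simp add: divide_right_mono)
  qed
  moreover have "c / e^2 > x0"
  proof -
    have "c \<ge> e * (D + 2)" using e0 D0 by (simp add: le_divide_eq)
    then have ce: "e * (D + 2) \<le> c" by simp
    have "(D + 2) / e = e * (D + 2) / e^2" using e0 by (simp add: power2_eq_square)
    also have "\<dots> \<le> c / e^2" using ce e0 by (simp add: divide_right_mono)
    finally have "c / e^2 \<ge> (D + 2) / e" .
    moreover have "(D + 2) / e \<ge> D + 2" using e0 D0 by (simp add: le_divide_eq)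
    ultimately show ?thesis unfolding x0_def using e0 by linarith
  qed
  ultimately have Gx0: "GG d \<phi> v z x0 > 0" unfolding GGa using z by linarith
  have cont: "continuous_on {x0..x1} (GG d \<phi> v z)"
    apply (rule DERIV_atLeastAtMost_imp_continuous_on)
    subgoal for t using derG[of t] e0 unfolding x0_def by auto
    done
  obtain r where r: "x0 \<le> r" "r \<le> x1" "GG d \<phi> v z r = 0"
    using IVT2'[of "GG d \<phi> v z" x1 0 x0, OF _ _ x01 cont] Gx0 Gx1 by auto
  have rD: "r > D" using r e0 unfolding x0_def by linarith
  have rroot: "secf_root d \<phi> v z r"
    unfolding secf_root_def secf_GG using rD D0 le r(3) by force
  have P4: "\<exists>!l. l > max (\<phi> d) z \<and> secf_root d \<phi> v z l"
  proof (rule ex1I[of _ r])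
    show "r > max (\<phi> d) z \<and> secf_root d \<phi> v z r" using rD rroot P1 D_def by auto
    fix l assume l: "l > max (\<phi> d) z \<and> secf_root d \<phi> v z l"
    then have lD: "l > D" and Gl: "GG d \<phi> v z l = 0" using D_def
      by (auto simp: secf_root_def secf_GG)
    show "l = r"
    proof (rule ccontr)
      assume "l \<noteq> r"
      then have "l < r \<or> r < l" by linarith
      then show False using dec[of l r] dec[of r l] lD rD Gl r(3) by auto
    qed
  qed
  show ?thesis using P1 P23 P4 by blast
qed

end
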